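(* Let $P'$ be any transition kernel, i.e. $P'\in\mathbb R_+^{\mathcal S\times\mathcal A\times\mathcal S}$ with $\sum_{s'}P'(s'|s,a)=1$ for all $s,a$, and let $\pi:\mathcal S\to\Delta(\mathcal A)$ be any stationary policy. Then $\|\rho^{P,\pi}-\rho^{P',\pi}\|_1\le\frac{1}{\alpha S}\sum_{s\in\mathcal S,a\in\mathcal A}\rho^{P',\pi}(s,a)\sum_{s'\in\mathcal S}|P(s'|s,a)-P'(s'|s,a)|$.
   Context: $\mathcal S,\mathcal A$ finite with $S=|\mathcal S|$; $P$ is a transition kernel with $P(s'|s,a)\ge\alpha>0$ for all $s,s',a$. For a transition kernel $Q$ and stationary policy $\pi$, the state-action occupancy measure is $\rho^{Q,\pi}(s,a)=\lim_{T\to\infty}\frac1T\sum_{t=1}^T\Pr(s^t=s,a^t=a)$ for the process $a^t\sim\pi(\cdot|s^t)$, $s^{t+1}\sim Q(\cdot|s^t,a^t)$; equivalently $\rho^{Q,\pi}(s,a)=\nu^{Q,\pi}(s)\pi(a|s)$ with $\nu^{Q,\pi}$ the corresponding long-run state frequencies, which form a stationary distribution of the chain $Q^\pi(s'|s)=\sum_a Q(s'|s,a)\pi(a|s)$. *)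

theory Defs
  imports Complex_Main
begin

text \<open>Kernels are encoded as Q s a s' = Q(s'|s,a); policies as pol s a = pol(a|s).\<close>

definition is_kernel :: "('s::finite \<Rightarrow> 'a::finite \<Rightarrow> 's \<Rightarrow> real) \<Rightarrow> bool" where
  "is_kernel Q \<longleftrightarrow> (\<forall>s a s'. Q s a s' \<ge> 0) \<and> (\<forall>s a. (\<Sum>s'\<in>UNIV. Q s a s') = 1)"

definition is_policy :: "('s::finite \<Rightarrow> 'a::finite \<Rightarrow> real) \<Rightarrow> bool" where
  "is_policy pol \<longleftrightarrow> (\<forall>s a. pol s a \<ge> 0) \<and> (\<forall>s. (\<Sum>a\<in>UNIV. pol s a) = 1)"

definition is_distribution :: "('s::finite \<Rightarrow> real) \<Rightarrow> bool" where
  "is_distribution mu \<longleftrightarrow> (\<forall>s. mu s \<ge> 0) \<and> (\<Sum>s\<in>UNIV. mu s) = 1"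

definition state_chain :: "('s::finite \<Rightarrow> 'a::finite \<Rightarrow> 's \<Rightarrow> real) \<Rightarrow> ('s \<Rightarrow> 'a \<Rightarrow> real) \<Rightarrow> 's \<Rightarrow> 's \<Rightarrow> real" where
  "state_chain Q pol s s' = (\<Sum>a\<in>UNIV. pol s a * Q s a s')"

text \<open>state_dist Q pol mu n s = Pr(s^{n+1} = s) when s^1 ~ mu.\<close>
fun state_dist :: "('s::finite \<Rightarrow> 'a::finite \<Rightarrow> 's \<Rightarrow> real) \<Rightarrow> ('s \<Rightarrow> 'a \<Rightarrow> real) \<Rightarrow> ('s \<Rightarrow> real) \<Rightarrow> nat \<Rightarrow> 's \<Rightarrow> real" where
  "state_dist Q pol mu 0 = mu"
| "state_dist Q pol mu (Suc n) = (\<lambda>s'. \<Sum>s\<in>UNIV. state_dist Q pol mu n s * state_chain Q pol s s')"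

definition occupancy :: "('s::finite \<Rightarrow> 'a::finite \<Rightarrow> 's \<Rightarrow> real) \<Rightarrow> ('s \<Rightarrow> 'a \<Rightarrow> real) \<Rightarrow> ('s \<Rightarrow> real) \<Rightarrow> 's \<Rightarrow> 'a \<Rightarrow> real" where
  "occupancy Q pol mu s a = lim (\<lambda>T. (\<Sum>t<T. state_dist Q pol mu t s * pol s a) / real T)"

end

theory Submission imports Defs "HOL-Analysis.Analysis" begin

lemma unique_limpt_conv:
  fixes X :: "nat \<Rightarrow> 'a::heine_borel"
  assumes bnd: "bounded (range X)"
    and lp: "\<And>L r. strict_mono r \<Longrightarrow> (X \<circ> r) \<longlonglongrightarrow> L \<Longrightarrow> Q L"
    and uq: "\<And>L1 L2. Q L1 \<Longrightarrow> Q L2 \<Longrightarrow> L1 = L2"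
  shows "\<exists>L. X \<longlonglongrightarrow> L \<and> Q L"
proof -
  obtain L0 r0 where r0: "strict_mono r0" "(X \<circ> r0) \<longlonglongrightarrow> L0"
    using bounded_imp_convergent_subsequence[OF bnd] by blast
  have Q0: "Q L0" using lp r0 by blast
  have "X \<longlonglongrightarrow> L0"
  proof (rule ccontr)
    assume "\<not> X \<longlonglongrightarrow> L0"
    then obtain e where e: "e > 0" "\<forall>N. \<exists>n\<ge>N. dist (X n) L0 \<ge> e"
      unfolding LIMSEQ_def by (meson not_less)
    have "infinite {n. dist (X n) L0 \<ge> e}"
      unfolding infinite_nat_iff_unbounded_le using e(2) by auto
    then obtain r :: "nat \<Rightarrow> nat" where r: "strict_mono r" "\<forall>n. dist (X (r n)) L0 \<ge> e"
      using infinite_enumerate by blast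
    have "bounded (range (X \<circ> r))" using bnd by (rule bounded_subset) auto
    then obtain L1 r1 where r1: "strict_mono r1" "((X \<circ> r) \<circ> r1) \<longlonglongrightarrow> L1"
      using bounded_imp_convergent_subsequence by blast
    have "strict_mono (r \<circ> r1)" using r(1) r1(1) by (simp add: strict_mono_o)
    moreover have "(X \<circ> (r \<circ> r1)) \<longlonglongrightarrow> L1" using r1(2) by (simp add: o_assoc)
    ultimately have "Q L1" using lp by blast
    hence "L1 = L0" using uq Q0 by blast
    hence lim0: "(\<lambda>n. dist (X (r (r1 n))) L0) \<longlonglongrightarrow> 0"
      using r1(2) tendsto_dist_iff[THEN iffD1] by (simp add: o_def)
    have "e \<le> 0" using LIMSEQ_le_const[OF lim0, of e] r(2) by blast
    then show False using e(1) by simp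
  qed
  thus ?thesis using Q0 by blast
qed


definition l1v :: "real^'n \<Rightarrow> real" where "l1v x = (\<Sum>i\<in>UNIV. \<bar>x$i\<bar>)"

lemma norm_le_l1v: "norm x \<le> l1v x" unfolding l1v_def by (rule norm_le_l1_cart)

locale stoch =
  fixes At :: "real^'n^'n"
  assumes nn: "\<And>i j. At$i$j \<ge> 0" and cs: "\<And>j. (\<Sum>i\<in>UNIV. At$i$j) = 1"
begin

definition pw :: "nat \<Rightarrow> real^'n \<Rightarrow> real^'n" where "pw t = ((*v) At ^^ t)"

definition g :: "real^'n \<Rightarrow> real^'n" where "g x = At *v x - x"

lemma g_mat: "g x = (At - mat 1) *v x"
  by (simp add: g_def matrix_vector_mult_diff_rdistrib)

lemma lin_g: "linear g"
  unfolding g_mat[abs_def] by simp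

lemma pw_Suc: "pw (Suc t) x = At *v pw t x"
  by (simp add: pw_def)

lemma pw_0[simp]: "pw 0 x = x" by (simp add: pw_def)

lemma l1_contract: "l1v (At *v x) \<le> l1v x"
proof -
  have "l1v (At *v x) = (\<Sum>i\<in>UNIV. \<bar>\<Sum>j\<in>UNIV. At$i$j * x$j\<bar>)"
    by (simp add: l1v_def matrix_vector_mult_def)
  also have "\<dots> \<le> (\<Sum>i\<in>UNIV. \<Sum>j\<in>UNIV. At$i$j * \<bar>x$j\<bar>)"
    by (intro sum_mono order.trans[OF sum_abs]) (simp add: abs_mult nn)
  also have "\<dots> = (\<Sum>j\<in>UNIV. (\<Sum>i\<in>UNIV. At$i$j) * \<bar>x$j\<bar>)"
    by (subst sum.swap) (simp add: sum_distrib_right)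
  also have "\<dots> = l1v x" by (simp add: cs l1v_def)
  finally show ?thesis .
qed

lemma l1_pw: "l1v (pw t x) \<le> l1v x"
  by (induction t) (auto simp: pw_Suc intro: order.trans[OF l1_contract])

lemma norm_pw: "norm (pw t x) \<le> l1v x"
  using norm_le_l1v l1_pw order.trans by blast

lemma g_pw: "g (pw t x) = pw (Suc t) x - pw t x"
  by (simp add: g_def pw_Suc)

definition C :: "real^'n \<Rightarrow> nat \<Rightarrow> real^'n" where
  "C mu T = (1 / real T) *\<^sub>R (\<Sum>t<T. pw t mu)"

lemma g_C: "g (C mu T) = (1 / real T) *\<^sub>R (pw T mu - mu)"
proof -
  have "g (C mu T) = (1 / real T) *\<^sub>R (\<Sum>t<T. g (pw t mu))"
    unfolding C_def by (simp add: linear_cmul[OF lin_g] linear_sum[OF lin_g])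
  also have "(\<Sum>t<T. g (pw t mu)) = pw T mu - mu"
    unfolding g_pw by (subst sum_lessThan_telescope) simp
  finally show ?thesis .
qed

lemma g_C_lim: "(\<lambda>T. g (C mu T)) \<longlonglongrightarrow> 0"
proof (rule Lim_null_comparison)
  show "\<forall>\<^sub>F T in sequentially. norm (g (C mu T)) \<le> 2 * l1v mu / real T"
  proof (rule always_eventually, rule allI)
    fix T
    have "norm (g (C mu T)) = (1 / real T) * norm (pw T mu - mu)"
      by (simp add: g_C)
    also have "\<dots> \<le> (1 / real T) * (2 * l1v mu)"
    proof (rule mult_left_mono)
      have "norm (pw T mu - mu) \<le> norm (pw T mu) + norm mu" by (rule norm_triangle_ineq4)
      also have "\<dots> \<le> 2 * l1v mu" using norm_pw[of T mu] norm_le_l1v[of mu] by simp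
      finally show "norm (pw T mu - mu) \<le> 2 * l1v mu" .
    qed simp
    finally show "norm (g (C mu T)) \<le> 2 * l1v mu / real T" by simp
  qed
  show "(\<lambda>T. 2 * l1v mu / real T) \<longlonglongrightarrow> 0" by (rule lim_const_over_n)
qed

lemma C_bounded: "bounded (range (C mu))"
proof -
  have "norm (C mu T) \<le> l1v mu" for T
  proof (cases "T = 0")
    case True then show ?thesis using norm_le_l1v[of mu] norm_ge_zero order.trans
      by (simp add: C_def l1v_def sum_nonneg)
  next
    case False
    have "norm (C mu T) = (1 / real T) * norm (\<Sum>t<T. pw t mu)" by (simp add: C_def)
    also have "\<dots> \<le> (1 / real T) * (\<Sum>t<T. norm (pw t mu))"
      by (intro mult_left_mono norm_sum) simp
    also have "\<dots> \<le> (1 / real T) * (\<Sum>t<T. l1v mu)"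
      by (intro mult_left_mono sum_mono norm_pw) simp
    also have "\<dots> = l1v mu" using False by simp
    finally show ?thesis .
  qed
  then show ?thesis by (intro boundedI) auto
qed

lemma C_minus_mu: "T \<ge> 1 \<Longrightarrow> C mu T - mu \<in> range g"
proof -
  assume T: "T \<ge> 1"
  define D where "D = (1 / real T) *\<^sub>R (\<Sum>t<T. \<Sum>j<t. pw j mu)"
  have "g D = (1 / real T) *\<^sub>R (\<Sum>t<T. \<Sum>j<t. g (pw j mu))"
    unfolding D_def by (simp add: linear_cmul[OF lin_g] linear_sum[OF lin_g])
  also have "(\<Sum>t<T. \<Sum>j<t. g (pw j mu)) = (\<Sum>t<T. pw t mu - mu)"
    unfolding g_pw by (intro sum.cong refl, subst sum_lessThan_telescope) simp
  also have "\<dots> = (\<Sum>t<T. pw t mu) - real T *\<^sub>R mu"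
    by (simp only: sum_subtractf sum_constant_scaleR card_lessThan)
  also have "(1 / real T) *\<^sub>R \<dots> = C mu T - mu"
    using T by (simp add: C_def scaleR_diff_right)
  finally show ?thesis by (metis rangeI)
qed

lemma subspace_range_g: "subspace (range g)"
  using lin_g by (simp add: linear_subspace_image)

lemma closed_range_g: "closed (range g)"
  by (rule closed_subspace[OF subspace_range_g])

definition Qp :: "real^'n \<Rightarrow> real^'n \<Rightarrow> bool" where
  "Qp mu L \<longleftrightarrow> g L = 0 \<and> L - mu \<in> range g"

lemma limpt_Q:
  assumes r: "strict_mono r" and lim: "(C mu \<circ> r) \<longlonglongrightarrow> L"
  shows "Qp mu L"
proof -
  have bl: "bounded_linear g" using lin_g linear_conv_bounded_linear by blast
  have "(\<lambda>n. g (C mu (r n))) \<longlonglongrightarrow> g L"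
    using bounded_linear.tendsto[OF bl lim] by (simp add: o_def)
  moreover have "(\<lambda>n. g (C mu (r n))) \<longlonglongrightarrow> 0"
    using LIMSEQ_subseq_LIMSEQ[OF g_C_lim r] by (simp add: o_def)
  ultimately have "g L = 0" using LIMSEQ_unique by blast
  moreover have "L - mu \<in> range g"
  proof (rule Lim_in_closed_set[OF closed_range_g])
    show "(\<lambda>n. C mu (r n) - mu) \<longlonglongrightarrow> L - mu"
      using lim by (intro tendsto_intros) (simp add: o_def)
    show "\<forall>\<^sub>F n in sequentially. C mu (r n) - mu \<in> range g"
    proof (rule eventually_sequentiallyI[of 1])
      fix n :: nat assume "n \<ge> 1"
      then have "r n \<ge> 1" using seq_suble[OF r, of n] by simp
      then show "C mu (r n) - mu \<in> range g" by (rule C_minus_mu)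
    qed
  qed simp
  ultimately show ?thesis by (simp add: Qp_def)
qed

lemma ker_range_trivial:
  assumes "g x = 0" and "x = g y"
  shows "x = 0"
proof -
  have Ax: "At *v x = x" using assms(1) by (simp add: g_def)
  have Ay: "At *v y = y + x" using assms(2) by (simp add: g_def)
  have pwy: "pw t y = y + real t *\<^sub>R x" for t
  proof (induction t)
    case (Suc t)
    have "pw (Suc t) y = At *v (y + real t *\<^sub>R x)" by (simp add: pw_Suc Suc)
    also have "\<dots> = At *v y + real t *\<^sub>R (At *v x)"
      by (simp add: matrix_vector_right_distrib matrix_vector_mult_scaleR)
    also have "\<dots> = y + real (Suc t) *\<^sub>R x" by (simp add: Ax Ay algebra_simps)
    finally show ?case .
  qed simp
  have "x$i = 0" for i
  proof (rule ccontr)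
    assume ne: "x$i \<noteq> 0"
    have bnd: "real t * \<bar>x$i\<bar> \<le> 2 * l1v y" for t
    proof -
      have "real t * \<bar>x$i\<bar> = \<bar>(pw t y)$i - y$i\<bar>" by (simp add: pwy abs_mult)
      also have "\<dots> \<le> \<bar>(pw t y)$i\<bar> + \<bar>y$i\<bar>" by (rule abs_triangle_ineq4)
      also have "\<dots> \<le> norm (pw t y) + norm y"
        by (intro add_mono component_le_norm_cart)
      also have "\<dots> \<le> 2 * l1v y" using norm_pw[of t y] norm_le_l1v[of y] by simp
      finally show ?thesis .
    qed
    obtain t :: nat where t: "real t > 2 * l1v y / \<bar>x$i\<bar>" using reals_Archimedean2 by blast
    then have "real t * \<bar>x$i\<bar> > 2 * l1v y" using ne by (simp add: field_simps)
    then show False using bnd[of t] by simp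
  qed
  then show ?thesis by (simp add: vec_eq_iff)
qed

lemma Q_unique: "Qp mu L1 \<Longrightarrow> Qp mu L2 \<Longrightarrow> L1 = L2"
proof -
  assume q1: "Qp mu L1" and q2: "Qp mu L2"
  have "g (L1 - L2) = 0" using q1 q2 by (simp add: Qp_def linear_diff[OF lin_g])
  moreover have "L1 - L2 \<in> range g"
  proof -
    have e: "L1 - L2 = (L1 - mu) - (L2 - mu)" by simp
    show ?thesis
      by (subst e, rule subspace_diff[OF subspace_range_g]) (use q1 q2 in \<open>auto simp: Qp_def\<close>)
  qed
  ultimately have "L1 - L2 = 0" using ker_range_trivial by blast
  then show ?thesis by simp
qed

lemma C_conv: "\<exists>L. C mu \<longlonglongrightarrow> L \<and> At *v L = L"
proof -
  obtain L where "C mu \<longlonglongrightarrow> L" "Qp mu L"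
    using unique_limpt_conv[OF C_bounded, where Q="Qp mu"] limpt_Q Q_unique by blast
  then show ?thesis by (auto simp: Qp_def g_def)
qed

end


lemma sd_nonneg:
  assumes "is_kernel Q" "is_policy pol" "is_distribution mu"
  shows "state_dist Q pol mu t s \<ge> 0"
  using assms
  by (induction t arbitrary: s)
     (auto simp: is_distribution_def is_kernel_def is_policy_def state_chain_def
       intro!: sum_nonneg mult_nonneg_nonneg)

lemma chain_rowsum:
  assumes "is_kernel Q" "is_policy pol"
  shows "(\<Sum>s'\<in>UNIV. state_chain Q pol s s') = 1"
proof -
  have "(\<Sum>s'\<in>UNIV. state_chain Q pol s s') = (\<Sum>a\<in>UNIV. pol s a * (\<Sum>s'\<in>UNIV. Q s a s'))"
    unfolding state_chain_def by (subst sum.swap) (simp add: sum_distrib_left)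
  also have "\<dots> = 1" using assms by (simp add: is_kernel_def is_policy_def)
  finally show ?thesis .
qed

lemma chain_nonneg:
  assumes "is_kernel Q" "is_policy pol"
  shows "state_chain Q pol s s' \<ge> 0"
  using assms by (auto simp: is_kernel_def is_policy_def state_chain_def intro!: sum_nonneg)

lemma sd_sum:
  assumes "is_kernel Q" "is_policy pol" "is_distribution mu"
  shows "(\<Sum>s\<in>UNIV. state_dist Q pol mu t s) = 1"
proof (induction t)
  case 0 then show ?case using assms by (simp add: is_distribution_def)
next
  case (Suc t)
  have "(\<Sum>s\<in>UNIV. state_dist Q pol mu (Suc t) s)
      = (\<Sum>s\<in>UNIV. state_dist Q pol mu t s * (\<Sum>s'\<in>UNIV. state_chain Q pol s s'))"
    by (simp add: sum_distrib_left) (subst sum.swap, rule refl)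
  also have "\<dots> = 1" using Suc chain_rowsum[OF assms(1,2)] by simp
  finally show ?case .
qed

lemma occ_char:
  fixes Q :: "'s::finite \<Rightarrow> 'a::finite \<Rightarrow> 's \<Rightarrow> real"
  assumes K: "is_kernel Q" and Pp: "is_policy pol" and D: "is_distribution mu"
  shows "\<exists>\<nu>::'s\<Rightarrow>real. (\<forall>s a. occupancy Q pol mu s a = \<nu> s * pol s a)
     \<and> (\<forall>s'. \<nu> s' = (\<Sum>s\<in>UNIV. \<nu> s * state_chain Q pol s s'))
     \<and> (\<forall>s. \<nu> s \<ge> 0) \<and> (\<Sum>s\<in>UNIV. \<nu> s) = 1"
proof -
  define At :: "real^'s^'s" where "At = (\<chi> i j. state_chain Q pol j i)"
  interpret stoch At
    by unfold_locales (auto simp: At_def chain_nonneg[OF K Pp] chain_rowsum[OF K Pp])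
  define m where "m = (\<chi> s. mu s)"
  have pwsd: "(pw t m)$s = state_dist Q pol mu t s" for t s
  proof (induction t arbitrary: s)
    case 0 then show ?case by (simp add: m_def)
  next
    case (Suc t)
    then show ?case
      by (simp only: pw_Suc) (simp add: matrix_vector_mult_def At_def mult.commute)
  qed
  have Cs: "(C m T)$s = (\<Sum>t<T. state_dist Q pol mu t s) / real T" for T s
    by (simp add: C_def pwsd sum_component)
  obtain L where L: "C m \<longlonglongrightarrow> L" "At *v L = L" using C_conv by blast
  define \<nu> where "\<nu> s = L$s" for s
  have Ls: "(\<lambda>T. (\<Sum>t<T. state_dist Q pol mu t s) / real T) \<longlonglongrightarrow> \<nu> s" for s
    using tendsto_vec_nth[OF L(1), of s] by (simp add: Cs \<nu>_def)
  have occ: "occupancy Q pol mu s a = \<nu> s * pol s a" for s a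
  proof -
    have "(\<lambda>T. (\<Sum>t<T. state_dist Q pol mu t s * pol s a) / real T) \<longlonglongrightarrow> \<nu> s * pol s a"
      using tendsto_mult_right[OF Ls[of s], of "pol s a"]
      by (simp add: sum_distrib_right[symmetric])
    then show ?thesis unfolding occupancy_def by (rule limI)
  qed
  have stat: "\<nu> s' = (\<Sum>s\<in>UNIV. \<nu> s * state_chain Q pol s s')" for s'
  proof -
    have "\<nu> s' = (At *v L)$s'" using L(2) by (simp add: \<nu>_def)
    also have "\<dots> = (\<Sum>s\<in>UNIV. \<nu> s * state_chain Q pol s s')"
      by (simp add: matrix_vector_mult_def At_def \<nu>_def mult.commute)
    finally show ?thesis .
  qed
  have nn: "\<nu> s \<ge> 0" for s
    by (rule LIMSEQ_le_const[OF Ls[of s]]) (auto intro!: divide_nonneg_nonneg sum_nonneg sd_nonneg[OF K Pp D])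
  have "(\<lambda>T. \<Sum>s\<in>UNIV. (\<Sum>t<T. state_dist Q pol mu t s) / real T) \<longlonglongrightarrow> (\<Sum>s\<in>UNIV. \<nu> s)"
    by (intro tendsto_sum Ls)
  moreover have "(\<lambda>T. \<Sum>s\<in>UNIV. (\<Sum>t<T. state_dist Q pol mu t s) / real T) \<longlonglongrightarrow> 1"
  proof (rule Lim_transform_eventually[OF tendsto_const], rule eventually_sequentiallyI[of 1])
    fix T :: nat assume T: "T \<ge> 1"
    have "(\<Sum>s\<in>UNIV. (\<Sum>t<T. state_dist Q pol mu t s) / real T)
        = (\<Sum>t<T. \<Sum>s\<in>UNIV. state_dist Q pol mu t s) / real T"
      by (simp add: sum_divide_distrib[symmetric] sum.swap[of _ UNIV])
    also have "\<dots> = 1" using T by (simp add: sd_sum[OF K Pp D])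
    finally show "1 = (\<Sum>s\<in>UNIV. (\<Sum>t<T. state_dist Q pol mu t s) / real T)" by simp
  qed
  ultimately have "(\<Sum>s\<in>UNIV. \<nu> s) = 1" using LIMSEQ_unique by blast
  then show ?thesis using occ stat nn by blast
qed


theorem lemma8:
  fixes P P' :: "'s::finite \<Rightarrow> 'a::finite \<Rightarrow> 's \<Rightarrow> real"
    and pol :: "'s \<Rightarrow> 'a \<Rightarrow> real"
    and mu mu' :: "'s \<Rightarrow> real"
    and \<alpha> :: real
  assumes "is_kernel P"
    and "\<alpha> > 0"
    and "\<forall>s a s'. P s a s' \<ge> \<alpha>"
    and "is_kernel P'"
    and "is_policy pol"
    and "is_distribution mu"
    and "is_distribution mu'"
  shows "(\<Sum>s\<in>UNIV. \<Sum>a\<in>UNIV. \<bar>occupancy P pol mu s a - occupancy P' pol mu' s a\<bar>)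
     \<le> 1 / (\<alpha> * real (card (UNIV :: 's set))) *
        (\<Sum>s\<in>UNIV. \<Sum>a\<in>UNIV. occupancy P' pol mu' s a *
           (\<Sum>s'\<in>UNIV. \<bar>P s a s' - P' s a s'\<bar>))"
proof -
  note K = assms(1) and apos = assms(2) and Pge = assms(3) and K' = assms(4)
    and Pp = assms(5) and D = assms(6) and D' = assms(7)
  obtain \<nu> where occ: "\<And>s a. occupancy P pol mu s a = \<nu> s * pol s a"
    and st: "\<And>s'. \<nu> s' = (\<Sum>s\<in>UNIV. \<nu> s * state_chain P pol s s')"
    and sum1: "(\<Sum>s\<in>UNIV. \<nu> s) = 1"
    using occ_char[OF K Pp D] by blast
  obtain \<nu>' where occ': "\<And>s a. occupancy P' pol mu' s a = \<nu>' s * pol s a"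
    and st': "\<And>s'. \<nu>' s' = (\<Sum>s\<in>UNIV. \<nu>' s * state_chain P' pol s s')"
    and nn': "\<And>s. \<nu>' s \<ge> 0"
    and sum1': "(\<Sum>s\<in>UNIV. \<nu>' s) = 1"
    using occ_char[OF K' Pp D'] by blast
  define M where "M = state_chain P pol"
  define M' where "M' = state_chain P' pol"
  define d where "d s = \<nu> s - \<nu>' s" for s
  define e where "e s' = (\<Sum>s\<in>UNIV. \<nu>' s * (M s s' - M' s s'))" for s'
  define S where "S = real (card (UNIV :: 's set))"
  have Spos: "S > 0" by (simp add: S_def)
  have pol_nn: "pol s a \<ge> 0" and pol_sum: "(\<Sum>a\<in>UNIV. pol s a) = 1" for s a
    using Pp by (auto simp: is_policy_def)
  have sumd: "(\<Sum>s\<in>UNIV. d s) = 0"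
    using sum1 sum1' by (simp add: d_def sum_subtractf)
  have Mge: "M s s' \<ge> \<alpha>" for s s'
  proof -
    have "(\<Sum>a\<in>UNIV. pol s a * \<alpha>) \<le> M s s'"
      unfolding M_def state_chain_def
      by (intro sum_mono mult_left_mono) (use Pge pol_nn in auto)
    then show ?thesis by (simp add: sum_distrib_right[symmetric] pol_sum)
  qed
  have Mrow: "(\<Sum>s'\<in>UNIV. M s s') = 1" for s
    unfolding M_def using chain_rowsum[OF K Pp] .
  have dexp: "d s' = (\<Sum>s\<in>UNIV. d s * (M s s' - \<alpha>)) + e s'" for s'
  proof -
    have "(\<Sum>s\<in>UNIV. d s * (M s s' - \<alpha>)) = (\<Sum>s\<in>UNIV. d s * M s s') - (\<Sum>s\<in>UNIV. d s) * \<alpha>"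
      by (simp add: right_diff_distrib sum_subtractf sum_distrib_right)
    also have "\<dots> = (\<Sum>s\<in>UNIV. d s * M s s')" by (simp add: sumd)
    finally have 1: "(\<Sum>s\<in>UNIV. d s * (M s s' - \<alpha>)) = (\<Sum>s\<in>UNIV. d s * M s s')" .
    have "d s' = (\<Sum>s\<in>UNIV. \<nu> s * M s s') - (\<Sum>s\<in>UNIV. \<nu>' s * M' s s')"
      using st[of s'] st'[of s'] by (simp add: d_def M_def M'_def)
    also have "\<dots> = (\<Sum>s\<in>UNIV. d s * M s s') + e s'"
      by (simp add: d_def e_def algebra_simps sum_subtractf)
    finally show ?thesis using 1 by simp
  qed
  have dabs: "\<bar>d s'\<bar> \<le> (\<Sum>s\<in>UNIV. \<bar>d s\<bar> * (M s s' - \<alpha>)) + \<bar>e s'\<bar>" for s'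
  proof -
    have "\<bar>d s'\<bar> \<le> \<bar>\<Sum>s\<in>UNIV. d s * (M s s' - \<alpha>)\<bar> + \<bar>e s'\<bar>"
      by (subst dexp) (rule abs_triangle_ineq)
    also have "\<bar>\<Sum>s\<in>UNIV. d s * (M s s' - \<alpha>)\<bar> \<le> (\<Sum>s\<in>UNIV. \<bar>d s\<bar> * (M s s' - \<alpha>))"
      by (rule order.trans[OF sum_abs]) (use Mge in \<open>simp add: abs_mult\<close>)
    finally show ?thesis by simp
  qed
  have "(\<Sum>s'\<in>UNIV. \<bar>d s'\<bar>) \<le> (\<Sum>s'\<in>UNIV. \<Sum>s\<in>UNIV. \<bar>d s\<bar> * (M s s' - \<alpha>)) + (\<Sum>s'\<in>UNIV. \<bar>e s'\<bar>)"
    using sum_mono[OF dabs] by (simp add: sum.distrib)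
  also have "(\<Sum>s'\<in>UNIV. \<Sum>s\<in>UNIV. \<bar>d s\<bar> * (M s s' - \<alpha>)) = (\<Sum>s\<in>UNIV. \<bar>d s\<bar> * (1 - S * \<alpha>))"
  proof -
    have "(\<Sum>s'\<in>UNIV. \<Sum>s\<in>UNIV. \<bar>d s\<bar> * (M s s' - \<alpha>)) = (\<Sum>s\<in>UNIV. \<bar>d s\<bar> * (\<Sum>s'\<in>UNIV. M s s' - \<alpha>))"
      by (subst sum.swap) (simp add: sum_distrib_left)
    also have "\<dots> = (\<Sum>s\<in>UNIV. \<bar>d s\<bar> * (1 - S * \<alpha>))"
      by (simp add: sum_subtractf Mrow S_def)
    finally show ?thesis .
  qed
  finally have k0: "(\<Sum>s'\<in>UNIV. \<bar>d s'\<bar>) \<le> (\<Sum>s\<in>UNIV. \<bar>d s\<bar> * (1 - S * \<alpha>)) + (\<Sum>s'\<in>UNIV. \<bar>e s'\<bar>)" .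
  have k1: "(\<Sum>s\<in>UNIV. \<bar>d s\<bar> * (1 - S * \<alpha>)) = (\<Sum>s\<in>UNIV. \<bar>d s\<bar>) - S * \<alpha> * (\<Sum>s\<in>UNIV. \<bar>d s\<bar>)"
    by (simp only: sum_distrib_right[symmetric]) (simp add: algebra_simps)
  have key: "S * \<alpha> * (\<Sum>s\<in>UNIV. \<bar>d s\<bar>) \<le> (\<Sum>s'\<in>UNIV. \<bar>e s'\<bar>)"
    using k0 unfolding k1 by linarith
  define RS where "RS = (\<Sum>s\<in>UNIV. \<Sum>a\<in>UNIV. occupancy P' pol mu' s a *
           (\<Sum>s'\<in>UNIV. \<bar>P s a s' - P' s a s'\<bar>))"
  have eabs: "\<bar>e s'\<bar> \<le> (\<Sum>s\<in>UNIV. \<Sum>a\<in>UNIV. \<nu>' s * pol s a * \<bar>P s a s' - P' s a s'\<bar>)" for s'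
  proof -
    have "e s' = (\<Sum>s\<in>UNIV. \<Sum>a\<in>UNIV. \<nu>' s * pol s a * (P s a s' - P' s a s'))"
      by (simp add: e_def M_def M'_def state_chain_def sum_distrib_left algebra_simps sum_subtractf)
    also have "\<bar>\<dots>\<bar> \<le> (\<Sum>s\<in>UNIV. \<Sum>a\<in>UNIV. \<bar>\<nu>' s * pol s a * (P s a s' - P' s a s')\<bar>)"
      by (rule order.trans[OF sum_abs]) (intro sum_mono sum_abs)
    also have "\<dots> = (\<Sum>s\<in>UNIV. \<Sum>a\<in>UNIV. \<nu>' s * pol s a * \<bar>P s a s' - P' s a s'\<bar>)"
      using nn' pol_nn by (simp add: abs_mult)
    finally show ?thesis .
  qed
  have E_RS: "(\<Sum>s'\<in>UNIV. \<bar>e s'\<bar>) \<le> RS"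
  proof -
    have "(\<Sum>s'\<in>UNIV. \<bar>e s'\<bar>) \<le> (\<Sum>s'\<in>UNIV. \<Sum>s\<in>UNIV. \<Sum>a\<in>UNIV. \<nu>' s * pol s a * \<bar>P s a s' - P' s a s'\<bar>)"
      by (rule sum_mono[OF eabs])
    also have "\<dots> = RS"
      unfolding RS_def occ' sum_distrib_left
      by (subst sum.swap, rule sum.cong[OF refl], subst sum.swap, simp)
    finally show ?thesis .
  qed
  have LHS: "(\<Sum>s\<in>UNIV. \<Sum>a\<in>UNIV. \<bar>occupancy P pol mu s a - occupancy P' pol mu' s a\<bar>)
      = (\<Sum>s\<in>UNIV. \<bar>d s\<bar>)"
  proof -
    have "(\<Sum>a\<in>UNIV. \<bar>occupancy P pol mu s a - occupancy P' pol mu' s a\<bar>) = \<bar>d s\<bar>" for s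
    proof -
      have "(\<Sum>a\<in>UNIV. \<bar>occupancy P pol mu s a - occupancy P' pol mu' s a\<bar>)
          = (\<Sum>a\<in>UNIV. \<bar>d s\<bar> * pol s a)"
        using pol_nn by (intro sum.cong refl) (simp add: occ occ' d_def left_diff_distrib[symmetric] abs_mult)
      also have "\<dots> = \<bar>d s\<bar>" by (simp add: sum_distrib_left[symmetric] pol_sum)
      finally show ?thesis .
    qed
    then show ?thesis by simp
  qed
  have "(\<Sum>s\<in>UNIV. \<bar>d s\<bar>) \<le> RS / (\<alpha> * S)"
    using key E_RS apos Spos by (simp add: pos_le_divide_eq mult.commute mult.left_commute)
  then show ?thesis unfolding LHS RS_def[symmetric] S_def[symmetric] by simp
qed

end
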